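(* The minimal word (with respect to alphabetical order) of any equivalence class of words under $\sim$ is reduced.
   Context: $\mathcal{A}$ is the free associative $\mathbb{C}$-algebra on noncommuting generators $L,R$; words are finite products of these letters and a subword is a contiguous block of letters. A word is balanced if it contains equally many $L$'s and $R$'s. $\mathcal{J}$ is the two-sided ideal generated by $\{FG-GF : F,G \text{ nonempty balanced words}\}$, and $X\sim Y$ means $X-Y\in\mathcal{J}$; each equivalence class is finite. Alphabetical order is the lexicographic order with $L$ before $R$, a proper prefix preceding its extensions. A word is prime if it is nonempty, balanced, and not a product of two nonempty balanced words. For balanced $W=a_1\cdots a_n$, $e_k(W)=\sum_{i=1}^k\overline{a_i}$ with $\overline{R}=1$, $\overline{L}=-1$. A prime $P$ of length $n$ is an upper prime if $e_k(P)>0$ for $1\le k\le n-1$, and a lower prime if $e_k(P)<0$ for $1\le k\le n-1$. A word is reduced if it contains no subword $UD$ with $U$ an upper prime and $D$ a lower prime. *)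

theory Defs
  imports Complex_Main
begin

datatype letter = L | R

type_synonym word = "letter list"

text \<open>Elements of the free associative algebra over the complex numbers on the
noncommuting generators L, R, represented as coefficient functions on words
(only finitely supported ones arise below).\<close>

definition wvec :: "word \<Rightarrow> (word \<Rightarrow> complex)" where
  "wvec w = (\<lambda>u. if u = w then 1 else 0)"

definition balanced :: "word \<Rightarrow> bool" where
  "balanced w \<longleftrightarrow> count_list w L = count_list w R"

text \<open>The two-sided ideal J generated by FG - GF (F, G nonempty balanced words).
Since words span the algebra, J is the complex linear span of the elements
U (FG - GF) V with U, V words.\<close>

inductive_set J :: "(word \<Rightarrow> complex) set" where
  J_zero: "(\<lambda>_. 0) \<in> J"
| J_gen: "\<lbrakk>F \<noteq> []; G \<noteq> []; balanced F; balanced G\<rbrakk> \<Longrightarrow>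
     (\<lambda>u. c * (wvec (U @ F @ G @ V) u - wvec (U @ G @ F @ V) u)) \<in> J"
| J_add: "\<lbrakk>x \<in> J; y \<in> J\<rbrakk> \<Longrightarrow> (\<lambda>u. x u + y u) \<in> J"

definition wequiv :: "word \<Rightarrow> word \<Rightarrow> bool" (infix "\<approx>" 50) where
  "X \<approx> Y \<longleftrightarrow> (\<lambda>u. wvec X u - wvec Y u) \<in> J"

definition alph_less :: "word \<Rightarrow> word \<Rightarrow> bool" where
  "alph_less u v \<longleftrightarrow>
     (\<exists>w. w \<noteq> [] \<and> v = u @ w) \<or>
     (\<exists>p s t. u = p @ L # s \<and> v = p @ R # t)"

definition alph_le :: "word \<Rightarrow> word \<Rightarrow> bool" where
  "alph_le u v \<longleftrightarrow> u = v \<or> alph_less u v"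

definition prime_word :: "word \<Rightarrow> bool" where
  "prime_word P \<longleftrightarrow> P \<noteq> [] \<and> balanced P \<and>
     \<not> (\<exists>A B. A \<noteq> [] \<and> B \<noteq> [] \<and> balanced A \<and> balanced B \<and> P = A @ B)"

definition lbar :: "letter \<Rightarrow> int" where
  "lbar a = (if a = R then 1 else -1)"

definition ek :: "nat \<Rightarrow> word \<Rightarrow> int" where
  "ek k W = (\<Sum>i<k. lbar (W ! i))"

definition upper_prime :: "word \<Rightarrow> bool" where
  "upper_prime P \<longleftrightarrow> prime_word P \<and> (\<forall>k. 1 \<le> k \<and> k \<le> length P - 1 \<longrightarrow> ek k P > 0)"

definition lower_prime :: "word \<Rightarrow> bool" where
  "lower_prime P \<longleftrightarrow> prime_word P \<and> (\<forall>k. 1 \<le> k \<and> k \<le> length P - 1 \<longrightarrow> ek k P < 0)"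

definition reduced :: "word \<Rightarrow> bool" where
  "reduced W \<longleftrightarrow> \<not> (\<exists>A U D B. W = A @ U @ D @ B \<and> upper_prime U \<and> lower_prime D)"

end

theory Submission
  imports Defs
begin

lemma prime_len: "prime_word P \<Longrightarrow> 2 \<le> length P"
  unfolding prime_word_def balanced_def
  by (cases P; cases "tl P"; cases "hd P"; auto)

lemma upper_hd: "upper_prime U \<Longrightarrow> \<exists>U'. U = R # U'"
proof -
  assume u: "upper_prime U"
  hence l: "2 \<le> length U" using prime_len upper_prime_def by blast
  hence "ek 1 U > 0" using u unfolding upper_prime_def by auto
  hence "U ! 0 = R" by (simp add: ek_def lbar_def split: if_splits)
  thus ?thesis using l by (cases U) auto
qed

lemma lower_hd: "lower_prime U \<Longrightarrow> \<exists>U'. U = L # U'"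
proof -
  assume u: "lower_prime U"
  hence l: "2 \<le> length U" using prime_len lower_prime_def by blast
  hence "ek 1 U < 0" using u unfolding lower_prime_def by auto
  hence "U ! 0 = L" by (cases "U ! 0") (simp_all add: ek_def lbar_def)
  thus ?thesis using l by (cases U) auto
qed

lemma not_less_aux:
  assumes "W = A @ R # s" "Y = A @ L # t"
  shows "\<not> alph_less W Y"
proof
  assume "alph_less W Y"
  then consider (a) w where "Y = W @ w" | (b) p s' t' where "W = p @ L # s'" "Y = p @ R # t'"
    unfolding alph_less_def by blast
  thus False
  proof cases
    case a
    have "Y ! length A = W ! length A" using a assms by (simp add: nth_append)
    thus False using assms by (simp add: nth_append)
  next
    case b
    consider "length p < length A" | "length p = length A" | "length p > length A" by linarith
    thus False
    proof cases
      case 1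
      have "W ! length p = A ! length p" "Y ! length p = A ! length p"
        using 1 assms by (simp_all add: nth_append)
      thus False using b by simp
    next
      case 2
      have "W ! length p = R" using 2 assms by (simp add: nth_append)
      thus False using b by simp
    next
      case 3
      have "W ! length A = p ! length A" "Y ! length A = p ! length A"
        using 3 b by (simp_all add: nth_append)
      thus False using assms by (simp add: nth_append)
    qed
  qed
qed

theorem lemma6p2:
  fixes W :: word
  assumes "\<forall>Y. W \<approx> Y \<longrightarrow> alph_le W Y"
  shows "reduced W"
  unfolding reduced_def
proof
  assume "\<exists>A U D B. W = A @ U @ D @ B \<and> upper_prime U \<and> lower_prime D"
  then obtain A U D B where W: "W = A @ U @ D @ B" and u: "upper_prime U" and d: "lower_prime D"
    by blast
  obtain U' where U': "U = R # U'" using upper_hd u by blast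
  obtain D' where D': "D = L # D'" using lower_hd d by blast
  have "(\<lambda>u. 1 * (wvec (A @ U @ D @ B) u - wvec (A @ D @ U @ B) u)) \<in> J"
    by (rule J_gen) (use u d in \<open>auto simp: upper_prime_def lower_prime_def prime_word_def\<close>)
  hence "W \<approx> A @ D @ U @ B" using W by (simp add: wequiv_def)
  hence le: "alph_le W (A @ D @ U @ B)" using assms by blast
  have "\<not> alph_less W (A @ D @ U @ B)"
    by (rule not_less_aux[where A=A]) (simp_all add: W U' D')
  moreover have "W \<noteq> A @ D @ U @ B" using W U' D' by simp
  ultimately show False using le by (simp add: alph_le_def)
qed

end
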